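(* Let $X$ be a locally connected compact metric space and let $f\colon X\to X$ be a minimal homeomorphism. If there exists a Borel probability measure on $X$ which is inner-distal with respect to $f$, then $f$ is inner-distal.
   Context: A homeomorphism $f\colon X\to X$ is minimal if every orbit $\{f^n(x)\colon n\in\mathbb{Z}\}$ is dense in $X$. The proximal cell of $x$ is $\mathcal{P}(x)=\{y\in X\colon \inf_{n\in\mathbb{Z}} d(f^n(x),f^n(y))=0\}$; $f$ is inner-distal if $\operatorname{Int}\mathcal{P}(x)=\emptyset$ for all $x\in X$. A Borel probability measure $\mu$ is inner-distal with respect to $f$ if $\mu(\operatorname{Int}\mathcal{P}(x))=0$ for all $x\in X$. *)

theory Defs
  imports "HOL-Analysis.Analysis" "HOL-Probability.Probability"
begin

definition zpow :: "('a \<Rightarrow> 'a) \<Rightarrow> int \<Rightarrow> 'a \<Rightarrow> 'a" where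
  "zpow f n = (if 0 \<le> n then f ^^ nat n else (inv f) ^^ nat (- n))"

definition minimal_map :: "('a::topological_space \<Rightarrow> 'a) \<Rightarrow> bool" where
  "minimal_map f \<longleftrightarrow> (\<forall>x. closure {zpow f n x | n. True} = UNIV)"

definition proximal_cell :: "('a::metric_space \<Rightarrow> 'a) \<Rightarrow> 'a \<Rightarrow> 'a set" where
  "proximal_cell f x = {y. (INF n::int. dist (zpow f n x) (zpow f n y)) = 0}"

definition inner_distal :: "('a::metric_space \<Rightarrow> 'a) \<Rightarrow> bool" where
  "inner_distal f \<longleftrightarrow> (\<forall>x. interior (proximal_cell f x) = {})"

definition inner_distal_measure :: "'a::metric_space measure \<Rightarrow> ('a \<Rightarrow> 'a) \<Rightarrow> bool" where
  "inner_distal_measure \<mu> f \<longleftrightarrow> (\<forall>x. measure \<mu> (interior (proximal_cell f x)) = 0)"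

end

theory Submission
  imports Defs
begin

lemma zpow_succ:
  assumes "bij f"
  shows "zpow f (n+1) x = f (zpow f n x)"
proof (cases "0 \<le> n")
  case True
  then have "nat (n+1) = Suc (nat n)" by simp
  then show ?thesis using True by (simp add: zpow_def)
next
  case False
  define k where "k = nat (-(n+1))"
  have k: "nat (-n) = Suc k" "nat (-(n+1)) = k" using False by (auto simp: k_def)
  show ?thesis
  proof (cases "n = -1")
    case True
    then show ?thesis using assms by (simp add: zpow_def bij_is_surj surj_f_inv_f)
  next
    case False': False
    then have "\<not> 0 \<le> n + 1" using False by simp
    then show ?thesis using False k assms
      by (simp add: zpow_def funpow_Suc_right[symmetric] bij_is_surj surj_f_inv_f del: funpow.simps)
         (metis bij_is_surj comp_apply funpow.simps(2) surj_f_inv_f)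
  qed
qed

lemma zpow_pred:
  assumes "bij f"
  shows "zpow f (n - 1) x = inv f (zpow f n x)"
proof -
  have "zpow f ((n - 1) + 1) x = f (zpow f (n-1) x)" using zpow_succ[OF assms] by blast
  then have "zpow f n x = f (zpow f (n-1) x)" by simp
  then show ?thesis using assms by (simp add: bij_is_inj inv_f_f)
qed

lemma zpow_0: "zpow f 0 x = x" by (simp add: zpow_def)

lemma zpow_add:
  assumes "bij f"
  shows "zpow f m (zpow f n x) = zpow f (m+n) x"
proof (induction m rule: int_induct[where k=0])
  case base
  then show ?case by (simp add: zpow_0)
next
  case (step1 i)
  then show ?case using zpow_succ[OF assms, of i] zpow_succ[OF assms, of "i+n"]
    by (simp add: algebra_simps)
next
  case (step2 i)
  then show ?case using zpow_pred[OF assms, of i] zpow_pred[OF assms, of "i+n"]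
    by (simp add: algebra_simps)
qed


lemma zpow_inv_cancel:
  assumes "bij f"
  shows "zpow f (-n) (zpow f n x) = x"
  using zpow_add[OF assms, of "-n" n x] by (simp add: zpow_0)

lemma zpow_cont:
  assumes "continuous_on UNIV f" "continuous_on UNIV (inv f)"
  shows "continuous_on UNIV (zpow f n)"
proof -
  have c: "continuous_on UNIV (h ^^ k)" if "continuous_on UNIV h" for h :: "'a::topological_space \<Rightarrow> 'a" and k
  proof (induction k)
    case 0 then show ?case by (simp add: continuous_on_id)
  next
    case (Suc k)
    then show ?case using that
      using continuous_on_compose2[of UNIV h UNIV "h ^^ k"] by simp
  qed
  show ?thesis unfolding zpow_def
    using c[OF assms(1)] c[OF assms(2)] by (cases "0 \<le> n") (auto simp: fun_eq_iff)
qed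

lemma zpow_open_image:
  assumes "bij f" "continuous_on UNIV f" "continuous_on UNIV (inv f)" "open U"
  shows "open (zpow f n ` U)"
proof -
  have "zpow f n ` U = zpow f (-n) -` U"
  proof (intro equalityI subsetI)
    fix z assume "z \<in> zpow f n ` U"
    then obtain y where "y \<in> U" "z = zpow f n y" by blast
    then show "z \<in> zpow f (-n) -` U"
      using zpow_inv_cancel[OF assms(1), of n y] by simp
  next
    fix y assume "y \<in> zpow f (-n) -` U"
    then have "zpow f (-n) y \<in> U" by simp
    moreover have "zpow f n (zpow f (-n) y) = y"
      using zpow_inv_cancel[OF assms(1), of "-n" y] by simp
    ultimately show "y \<in> zpow f n ` U" by (metis image_eqI)
  qed
  moreover have "open (zpow f (-n) -` U)"
    using zpow_cont[OF assms(2,3), of "-n"] assms(4)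
    unfolding continuous_on_open_vimage[OF open_UNIV] by simp
  ultimately show ?thesis by simp
qed

lemma INF_shift: "(INF n::int. h (n + k)) = (INF n. (h n :: real))"
proof -
  have "(\<lambda>n. n + k) ` UNIV = (UNIV :: int set)"
    by (metis surj_def add_diff_cancel diff_add_cancel)
  then show ?thesis by (metis image_image)
qed

lemma proximal_shift:
  assumes "bij f" "z \<in> proximal_cell f x"
  shows "zpow f k z \<in> proximal_cell f (zpow f k x)"
proof -
  have "(INF n::int. dist (zpow f n (zpow f k x)) (zpow f n (zpow f k z)))
      = (INF n::int. dist (zpow f (n+k) x) (zpow f (n+k) z))"
    by (simp add: zpow_add[OF assms(1)])
  also have "\<dots> = (INF n::int. dist (zpow f n x) (zpow f n z))"
    by (rule INF_shift[where h="\<lambda>n. dist (zpow f n x) (zpow f n z)"])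
  finally show ?thesis using assms(2) by (simp add: proximal_cell_def)
qed

theorem theorem2p15:
  fixes f :: "'a::metric_space \<Rightarrow> 'a"
  assumes "compact (UNIV :: 'a set)"
    and "locally connected (UNIV :: 'a set)"
    and "\<exists>g. homeomorphism UNIV UNIV f g"
    and "minimal_map f"
    and "\<exists>\<mu>::'a measure. prob_space \<mu> \<and> sets \<mu> = sets borel \<and> inner_distal_measure \<mu> f"
  shows "inner_distal f"
proof (rule ccontr)
  obtain g where hg: "homeomorphism UNIV UNIV f g" using assms(3) by blast
  then have gf: "\<And>x. g (f x) = x" and fg: "\<And>y. f (g y) = y"
    and cf: "continuous_on UNIV f" and cg: "continuous_on UNIV g"
    by (auto simp: homeomorphism_def)
  have invf: "inv f = g" using inv_equality[of g f] gf fg by blast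
  have bij: "bij f" using gf fg by (metis bijI' )
  have cinv: "continuous_on UNIV (inv f)" using cg invf by simp
  obtain \<mu> :: "'a measure" where mu: "prob_space \<mu>" "sets \<mu> = sets borel"
    "inner_distal_measure \<mu> f" using assms(5) by blast
  assume "\<not> inner_distal f"
  then obtain x where "interior (proximal_cell f x) \<noteq> {}" by (auto simp: inner_distal_def)
  define U where "U = interior (proximal_cell f x)"
  have U: "open U" "U \<noteq> {}" "U \<subseteq> proximal_cell f x"
    using \<open>interior (proximal_cell f x) \<noteq> {}\<close> interior_subset by (auto simp: U_def)
  have cover: "UNIV \<subseteq> (\<Union>n\<in>UNIV. zpow f n ` U)"
  proof
    fix y :: 'a
    have "closure {zpow f n y | n. True} = UNIV" using assms(4) by (simp add: minimal_map_def)
    then have "U \<inter> {zpow f n y | n. True} \<noteq> {}"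
      using open_Int_closure_eq_empty[OF U(1), of "{zpow f n y | n. True}"] U(2) by simp
    then obtain n where "zpow f n y \<in> U" by blast
    moreover have "zpow f (-n) (zpow f n y) = y" using zpow_inv_cancel[OF bij] by simp
    ultimately show "y \<in> (\<Union>n\<in>UNIV. zpow f n ` U)" by (metis UN_I UNIV_I image_eqI)
  qed
  obtain N where N: "finite N" "UNIV \<subseteq> (\<Union>n\<in>N. zpow f n ` U)"
    using compactE_image[OF assms(1) _ cover] zpow_open_image[OF bij cf cinv U(1)] by metis
  have sub: "zpow f n ` U \<subseteq> interior (proximal_cell f (zpow f n x))" for n
    using U(3) proximal_shift[OF bij] zpow_open_image[OF bij cf cinv U(1)]
    by (intro interior_maximal) auto
  have meas: "interior (proximal_cell f (zpow f n x)) \<in> sets \<mu>" for n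
    using mu(2) by simp
  have sp: "space \<mu> = UNIV" using sets_eq_imp_space_eq[OF mu(2)] by simp
  have "1 = measure \<mu> (UNIV :: 'a set)" using prob_space.prob_space[OF mu(1)] sp by simp
  also have "\<dots> \<le> measure \<mu> (\<Union>n\<in>N. interior (proximal_cell f (zpow f n x)))"
  proof -
    have "(\<Union>n\<in>N. interior (proximal_cell f (zpow f n x))) = UNIV"
      using N(2) sub by blast
    then show ?thesis by simp
  qed
  also have "\<dots> \<le> (\<Sum>n\<in>N. measure \<mu> (interior (proximal_cell f (zpow f n x))))"
    by (rule measure_UNION_le[OF N(1) meas])
  also have "\<dots> = 0" using mu(3) by (simp add: inner_distal_measure_def)
  finally show False by simp
qed

end
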